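(* For all integers $a,b\ge2$, the first Poisson cohomology $HP^1(\Lambda(a,b))$ (Poisson derivations modulo Hamiltonian derivations $\{\lambda,-\}$) is $2$-dimensional with basis the classes of $d_{1,0}$ and $d'_{0,1}$, where $d_{1,0}$ is the derivation with $d_{1,0}(X)=X$, $d_{1,0}(Y)=0$ and $d'_{0,1}$ is the derivation with $d'_{0,1}(X)=0$, $d'_{0,1}(Y)=Y$.
   Context: For integers $a,b\geq 2$, $\Lambda(a,b):=\mathbb C[X,Y]/(X^a,Y^b)$ with basis $X^iY^j$ ($0\le i\le a-1$, $0\le j\le b-1$) and Poisson bracket determined by $\{X,Y\}=XY$ (a skew-symmetric biderivation); equivalently $\{X^iY^j,X\}=-jX^{i+1}Y^j$, $\{X^iY^j,Y\}=iX^iY^{j+1}$. A Poisson derivation is a $\mathbb C$-linear derivation $d$ of $\Lambda(a,b)$ with $d\{f,g\}=\{df,g\}+\{f,dg\}$ for all $f,g$; Hamiltonian derivations are those of the form $\{\lambda,-\}$. $HP^1(\Lambda(a,b))$ is the quotient of Poisson derivations by Hamiltonian ones. *)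

theory Defs
  imports Complex_Main
begin

text \<open>Elements of Lambda(a,b) = C[X,Y]/(X^a,Y^b) are represented by their coefficient
  functions f :: nat \<times> nat \<Rightarrow> complex, where f (i,j) is the coefficient of X^i Y^j;
  the carrier consists of those functions vanishing outside {0..<a} \<times> {0..<b}.\<close>

type_synonym elt = "nat \<times> nat \<Rightarrow> complex"

definition Lam :: "nat \<Rightarrow> nat \<Rightarrow> elt set" where
  "Lam a b = {f. \<forall>i j. (a \<le> i \<or> b \<le> j) \<longrightarrow> f (i, j) = 0}"

definition lmult :: "nat \<Rightarrow> nat \<Rightarrow> elt \<Rightarrow> elt \<Rightarrow> elt" where
  "lmult a b f g = (\<lambda>(m, n). if m < a \<and> n < b then
      (\<Sum>i\<le>m. \<Sum>j\<le>n. f (i, j) * g (m - i, n - j)) else 0)"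

text \<open>Poisson bracket: bilinear extension of
  {X^i Y^j, X^k Y^l} = (i l - j k) X^(i+k) Y^(j+l), i.e. the biderivation with {X,Y} = XY.\<close>
definition lbr :: "nat \<Rightarrow> nat \<Rightarrow> elt \<Rightarrow> elt \<Rightarrow> elt" where
  "lbr a b f g = (\<lambda>(m, n). if m < a \<and> n < b then
      (\<Sum>i\<le>m. \<Sum>j\<le>n. (of_nat i * of_nat (n - j) - of_nat j * of_nat (m - i))
                          * f (i, j) * g (m - i, n - j)) else 0)"

definition Xel :: elt where "Xel = (\<lambda>p. if p = (1, 0) then 1 else 0)"
definition Yel :: elt where "Yel = (\<lambda>p. if p = (0, 1) then 1 else 0)"

definition is_linear_map :: "nat \<Rightarrow> nat \<Rightarrow> (elt \<Rightarrow> elt) \<Rightarrow> bool" where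
  "is_linear_map a b D \<longleftrightarrow>
     (\<forall>f\<in>Lam a b. D f \<in> Lam a b) \<and>
     (\<forall>f\<in>Lam a b. \<forall>g\<in>Lam a b. D (\<lambda>p. f p + g p) = (\<lambda>p. D f p + D g p)) \<and>
     (\<forall>c::complex. \<forall>f\<in>Lam a b. D (\<lambda>p. c * f p) = (\<lambda>p. c * D f p))"

definition is_derivation :: "nat \<Rightarrow> nat \<Rightarrow> (elt \<Rightarrow> elt) \<Rightarrow> bool" where
  "is_derivation a b D \<longleftrightarrow> is_linear_map a b D \<and>
     (\<forall>f\<in>Lam a b. \<forall>g\<in>Lam a b. D (lmult a b f g) = (\<lambda>p. lmult a b (D f) g p + lmult a b f (D g) p))"

definition is_poisson_derivation :: "nat \<Rightarrow> nat \<Rightarrow> (elt \<Rightarrow> elt) \<Rightarrow> bool" where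
  "is_poisson_derivation a b D \<longleftrightarrow> is_derivation a b D \<and>
     (\<forall>f\<in>Lam a b. \<forall>g\<in>Lam a b. D (lbr a b f g) = (\<lambda>p. lbr a b (D f) g p + lbr a b f (D g) p))"

definition d10 :: "elt \<Rightarrow> elt" where "d10 f = (\<lambda>(i, j). of_nat i * f (i, j))"
definition d01 :: "elt \<Rightarrow> elt" where "d01 f = (\<lambda>(i, j). of_nat j * f (i, j))"

end

theory Submission imports Defs "HOL-Computational_Algebra.Formal_Power_Series"
begin

notation fps_nth (infixl "!$" 75)

type_synonym R = "complex fps fps"

definition W :: "'a::comm_ring_1 fps \<Rightarrow> 'a fps" where
  "W F = Abs_fps (\<lambda>n. of_nat n * F !$ n)"

lemma W_nth[simp]: "W F !$ n = of_nat n * F !$ n" by (simp add: W_def)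

lemma W_add[simp]: "W (F + G) = W F + W G"
  by (rule fps_ext) (simp add: algebra_simps)
lemma W_neg[simp]: "W (- F) = - W F"
  by (rule fps_ext) simp
lemma W_diff[simp]: "W (F - G) = W F - W G"
  by (rule fps_ext) (simp add: algebra_simps)
lemma W_sum: "W (sum f S) = (\<Sum>x\<in>S. W (f x))"
  by (rule fps_ext) (simp add: fps_sum_nth sum_distrib_left)
lemma W_mult[simp]: "W (F * G) = W F * G + F * W G"
proof (rule fps_ext)
  fix n
  have "W (F * G) !$ n = (\<Sum>i=0..n. (of_nat i + of_nat (n - i)) * (F!$i * G!$(n-i)))"
    by (simp add: fps_mult_nth sum_distrib_left flip: of_nat_add)
  also have "\<dots> = (\<Sum>i=0..n. of_nat i * F!$i * G!$(n-i)) + (\<Sum>i=0..n. F!$i * (of_nat (n-i) * G!$(n-i)))"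
    by (simp add: sum.distrib[symmetric] algebra_simps)
  also have "\<dots> = (W F * G + F * W G) !$ n"
    by (simp add: fps_mult_nth)
  finally show "W (F * G) !$ n = (W F * G + F * W G) !$ n" .
qed
lemma W_zero[simp]: "W 0 = 0" by (rule fps_ext) simp
lemma W_one[simp]: "W 1 = 0" by (rule fps_ext) simp

definition E1 :: "R \<Rightarrow> R" where "E1 F = Abs_fps (\<lambda>j. W (F !$ j))"
definition E2 :: "R \<Rightarrow> R" where "E2 F = W F"

lemma E1_nth[simp]: "E1 F !$ j = W (F !$ j)" by (simp add: E1_def)
lemma E2_nth[simp]: "E2 F !$ j = of_nat j * F !$ j" by (simp add: E2_def)
lemma E2_nth2[simp]: "E2 F !$ j !$ i = of_nat j * F !$ j !$ i"
  by (simp add: E2_def flip: fps_of_nat)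

lemma E1_add[simp]: "E1 (F + G) = E1 F + E1 G" by (rule fps_ext) simp
lemma E1_neg[simp]: "E1 (- F) = - E1 F" by (rule fps_ext) simp
lemma E1_diff[simp]: "E1 (F - G) = E1 F - E1 G" by (rule fps_ext) simp
lemma E1_mult[simp]: "E1 (F * G) = E1 F * G + F * E1 G"
  by (rule fps_ext) (simp add: fps_mult_nth W_sum sum.distrib)
lemma E2_add[simp]: "E2 (F + G) = E2 F + E2 G" by (simp add: E2_def)
lemma E2_neg[simp]: "E2 (- F) = - E2 F" by (simp add: E2_def)
lemma E2_diff[simp]: "E2 (F - G) = E2 F - E2 G" by (simp add: E2_def)
lemma E2_mult[simp]: "E2 (F * G) = E2 F * G + F * E2 G" by (simp add: E2_def)
lemma W_const[simp]: "W (fps_const c) = 0" by (rule fps_ext) simp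
lemma W_of_nat_mult: "W (of_nat k * F) = of_nat k * W F"
  by (rule fps_ext) (simp add: algebra_simps flip: fps_of_nat)
lemma E21[simp]: "E2 (E1 F) = E1 (E2 F)"
  by (rule fps_ext) (simp add: W_of_nat_mult flip: fps_of_nat)

definition B :: "R \<Rightarrow> R \<Rightarrow> R" where "B F G = E1 F * E2 G - E2 F * E1 G"

lemma B_mult2: "B F (G * H) = B F G * H + G * B F H"
  by (simp add: B_def algebra_simps)
lemma B_jacobi: "B F (B G H) = B (B F G) H + B G (B F H)"
  by (simp add: B_def algebra_simps)
lemma E1_B: "E1 (B F G) = B (E1 F) G + B F (E1 G)"
  by (simp add: B_def algebra_simps)
lemma E2_B: "E2 (B F G) = B (E2 F) G + B F (E2 G)"
  by (simp add: B_def algebra_simps)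
lemma B_add2: "B F (G + H) = B F G + B F H"
  by (simp add: B_def algebra_simps)

lemma E1_const[simp]: "E1 (fps_const (fps_const c)) = 0"
  by (rule fps_ext) simp
lemma E2_const[simp]: "E2 (fps_const c) = 0"
  by (rule fps_ext) simp
lemma B_const2[simp]: "B F (fps_const (fps_const c) * G) = fps_const (fps_const c) * B F G"
  by (simp add: B_def algebra_simps)
lemma B_const1[simp]: "B (fps_const (fps_const c) * F) G = fps_const (fps_const c) * B F G"
  by (simp add: B_def algebra_simps)
lemma B_add1: "B (F + G) H = B F H + B G H"
  by (simp add: B_def algebra_simps)

definition emb :: "elt \<Rightarrow> R" where
  "emb f = Abs_fps (\<lambda>j. Abs_fps (\<lambda>i. f (i, j)))"
definition tr :: "nat \<Rightarrow> nat \<Rightarrow> R \<Rightarrow> elt" where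
  "tr a b F = (\<lambda>(m, n). if m < a \<and> n < b then F !$ n !$ m else 0)"

lemma emb_nth[simp]: "emb f !$ j !$ i = f (i, j)" by (simp add: emb_def)

lemma prod_nth: "(F * G) !$ n !$ m = (\<Sum>j\<le>n. \<Sum>i\<le>m. F !$ j !$ i * G !$ (n - j) !$ (m - i))"
  by (simp add: fps_mult_nth fps_sum_nth atLeast0AtMost)

lemma lmult_tr: "lmult a b f g = tr a b (emb f * emb g)"
  unfolding lmult_def tr_def
  by (rule ext) (auto simp: prod_nth intro: sum.swap)

lemma B_nth: "B F G !$ n !$ m = (\<Sum>j\<le>n. \<Sum>i\<le>m.
   (of_nat i * of_nat (n - j) - of_nat j * of_nat (m - i)) * F !$ j !$ i * G !$ (n - j) !$ (m - i))"
  unfolding B_def fps_sub_nth prod_nth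
  by (simp add: sum_subtractf[symmetric] algebra_simps)

lemma lbr_tr: "lbr a b f g = tr a b (B (emb f) (emb g))"
  unfolding lbr_def tr_def
  by (rule ext) (auto simp: B_nth intro: sum.swap)

lemma tr_Lam[simp]: "tr a b F \<in> Lam a b"
  by (auto simp: tr_def Lam_def)

lemma tr_emb: "f \<in> Lam a b \<Longrightarrow> tr a b (emb f) = f"
  by (rule ext) (auto simp: tr_def Lam_def)

lemma tr_eq_iff: "tr a b F = tr a b G \<longleftrightarrow> (\<forall>i<a. \<forall>j<b. F !$ j !$ i = G !$ j !$ i)"
  unfolding tr_def fun_eq_iff by force

lemma tr_add: "tr a b (F + G) = (\<lambda>p. tr a b F p + tr a b G p)"
  by (rule ext) (auto simp: tr_def)
lemma tr_diff: "tr a b (F - G) = (\<lambda>p. tr a b F p - tr a b G p)"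
  by (rule ext) (auto simp: tr_def)
lemma tr_const: "tr a b (fps_const (fps_const c) * F) = (\<lambda>p. c * tr a b F p)"
  by (rule ext) (auto simp: tr_def)

lemma tr_emb_tr: "tr a b (emb (tr a b F)) = tr a b F"
  unfolding tr_eq_iff by (simp add: tr_def)

lemma cong_mult1: "tr a b F = tr a b F' \<Longrightarrow> tr a b (F * G) = tr a b (F' * G)"
  unfolding tr_eq_iff by (auto simp: prod_nth intro!: sum.cong)
lemma cong_mult2: "tr a b G = tr a b G' \<Longrightarrow> tr a b (F * G) = tr a b (F * G')"
  using cong_mult1[of a b G G' F] by (simp add: mult.commute)
lemma cong_E1: "tr a b F = tr a b F' \<Longrightarrow> tr a b (E1 F) = tr a b (E1 F')"
  unfolding tr_eq_iff by auto
lemma cong_E2: "tr a b F = tr a b F' \<Longrightarrow> tr a b (E2 F) = tr a b (E2 F')"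
  unfolding tr_eq_iff by auto
lemma cong_B1: "tr a b F = tr a b F' \<Longrightarrow> tr a b (B F G) = tr a b (B F' G)"
  unfolding B_def tr_diff
  by (metis cong_mult1 cong_E1 cong_E2)
lemma cong_B2: "tr a b G = tr a b G' \<Longrightarrow> tr a b (B F G) = tr a b (B F G')"
  unfolding B_def tr_diff
  by (metis cong_mult2 cong_E1 cong_E2)

lemma emb_add: "emb (\<lambda>p. f p + g p) = emb f + emb g"
  by (rule fps_ext, rule fps_ext) simp
lemma emb_const: "emb (\<lambda>p. c * f p) = fps_const (fps_const c) * emb f"
  by (rule fps_ext, rule fps_ext) simp
lemma emb_d10: "emb (d10 f) = E1 (emb f)"
  by (rule fps_ext, rule fps_ext) (simp add: d10_def)
lemma emb_d01: "emb (d01 f) = E2 (emb f)"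
  by (rule fps_ext, rule fps_ext) (simp add: d01_def)
lemma d10_tr: "d10 (tr a b F) = tr a b (E1 F)"
  by (rule ext) (auto simp: d10_def tr_def)
lemma d01_tr: "d01 (tr a b F) = tr a b (E2 F)"
  by (rule ext) (auto simp: d01_def tr_def)

lemma d10_pd: "is_poisson_derivation a b d10"
  unfolding is_poisson_derivation_def is_derivation_def is_linear_map_def
proof (intro conjI ballI allI)
  fix f assume "f \<in> Lam a b" thus "d10 f \<in> Lam a b" by (auto simp: Lam_def d10_def)
next
  fix f g :: elt
  show "d10 (\<lambda>p. f p + g p) = (\<lambda>p. d10 f p + d10 g p)"
    by (rule ext) (auto simp: d10_def algebra_simps)
  show "d10 (lmult a b f g) = (\<lambda>p. lmult a b (d10 f) g p + lmult a b f (d10 g) p)"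
    by (simp add: lmult_tr d10_tr emb_d10 tr_add)
  show "d10 (lbr a b f g) = (\<lambda>p. lbr a b (d10 f) g p + lbr a b f (d10 g) p)"
    by (simp add: lbr_tr d10_tr emb_d10 tr_add E1_B)
next
  fix c :: complex and f :: elt
  show "d10 (\<lambda>p. c * f p) = (\<lambda>p. c * d10 f p)"
    by (rule ext) (auto simp: d10_def algebra_simps)
qed

lemma d01_pd: "is_poisson_derivation a b d01"
  unfolding is_poisson_derivation_def is_derivation_def is_linear_map_def
proof (intro conjI ballI allI)
  fix f assume "f \<in> Lam a b" thus "d01 f \<in> Lam a b" by (auto simp: Lam_def d01_def)
next
  fix f g :: elt
  show "d01 (\<lambda>p. f p + g p) = (\<lambda>p. d01 f p + d01 g p)"
    by (rule ext) (auto simp: d01_def algebra_simps)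
  show "d01 (lmult a b f g) = (\<lambda>p. lmult a b (d01 f) g p + lmult a b f (d01 g) p)"
    by (simp add: lmult_tr d01_tr emb_d01 tr_add)
  show "d01 (lbr a b f g) = (\<lambda>p. lbr a b (d01 f) g p + lbr a b f (d01 g) p)"
    by (simp add: lbr_tr d01_tr emb_d01 tr_add E2_B)
next
  fix c :: complex and f :: elt
  show "d01 (\<lambda>p. c * f p) = (\<lambda>p. c * d01 f p)"
    by (rule ext) (auto simp: d01_def algebra_simps)
qed

lemma ham_pd: "is_poisson_derivation a b (lbr a b l)"
  unfolding is_poisson_derivation_def is_derivation_def is_linear_map_def
proof (intro conjI ballI allI)
  fix f assume "f \<in> Lam a b" thus "lbr a b l f \<in> Lam a b" by (simp add: lbr_tr)
next
  fix f g :: elt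
  show "lbr a b l (\<lambda>p. f p + g p) = (\<lambda>p. lbr a b l f p + lbr a b l g p)"
    by (simp add: lbr_tr emb_add B_add2 tr_add)
  have "lbr a b l (lmult a b f g) = tr a b (B (emb l) (emb f * emb g))"
    by (simp add: lbr_tr lmult_tr cong_B2[OF tr_emb_tr])
  also have "\<dots> = (\<lambda>p. lmult a b (lbr a b l f) g p + lmult a b f (lbr a b l g) p)"
    by (simp add: B_mult2 tr_add lmult_tr lbr_tr cong_mult1[OF tr_emb_tr] cong_mult2[OF tr_emb_tr])
  finally show "lbr a b l (lmult a b f g) = (\<lambda>p. lmult a b (lbr a b l f) g p + lmult a b f (lbr a b l g) p)" .
  have "lbr a b l (lbr a b f g) = tr a b (B (emb l) (B (emb f) (emb g)))"
    by (simp add: lbr_tr cong_B2[OF tr_emb_tr])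
  also have "\<dots> = (\<lambda>p. lbr a b (lbr a b l f) g p + lbr a b f (lbr a b l g) p)"
    by (simp add: B_jacobi[of "emb l"] tr_add lbr_tr cong_B1[OF tr_emb_tr] cong_B2[OF tr_emb_tr])
  finally show "lbr a b l (lbr a b f g) = (\<lambda>p. lbr a b (lbr a b l f) g p + lbr a b f (lbr a b l g) p)" .
next
  fix c :: complex and f :: elt
  show "lbr a b l (\<lambda>p. c * f p) = (\<lambda>p. c * lbr a b l f p)"
    by (simp add: lbr_tr emb_const tr_const)
qed

lemma lmult_comm: "lmult a b f g = lmult a b g f"
  by (simp add: lmult_tr mult.commute)

lemma lmult_comb1: "lmult a b (\<lambda>p. c1 * f1 p + c2 * f2 p + f3 p) g
   = (\<lambda>p. c1 * lmult a b f1 g p + c2 * lmult a b f2 g p + lmult a b f3 g p)"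
  by (simp add: lmult_tr emb_add emb_const distrib_right tr_add tr_const mult.assoc)
lemma lmult_comb2: "lmult a b g (\<lambda>p. c1 * f1 p + c2 * f2 p + f3 p)
   = (\<lambda>p. c1 * lmult a b g f1 p + c2 * lmult a b g f2 p + lmult a b g f3 p)"
  using lmult_comb1[of a b c1 f1 c2 f2 f3 g] lmult_comm by simp

lemma deriv_comb:
  assumes "is_derivation a b D1" "is_derivation a b D2" "is_derivation a b D3"
  shows "is_derivation a b (\<lambda>f p. c1 * D1 f p + c2 * D2 f p + D3 f p)"
  using assms unfolding is_derivation_def is_linear_map_def
  apply (intro conjI ballI allI)
  apply (auto simp: Lam_def)[1]
  apply (simp add: fun_eq_iff algebra_simps)
  apply (simp add: fun_eq_iff algebra_simps)
  apply (simp only: lmult_comb1 lmult_comb2)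
  apply (simp add: fun_eq_iff algebra_simps)
  done

definition xR :: R where "xR = fps_const fps_X"
definition yR :: R where "yR = fps_X"

lemma emb_X: "emb Xel = xR"
  by (rule fps_ext, rule fps_ext) (auto simp: Xel_def xR_def)
lemma emb_Y: "emb Yel = yR"
  by (rule fps_ext, rule fps_ext) (auto simp: Yel_def yR_def)
lemma X_Lam: "2 \<le> a \<Longrightarrow> 2 \<le> b \<Longrightarrow> Xel \<in> Lam a b"
  by (auto simp: Lam_def Xel_def)
lemma Y_Lam: "2 \<le> a \<Longrightarrow> 2 \<le> b \<Longrightarrow> Yel \<in> Lam a b"
  by (auto simp: Lam_def Yel_def)

definition mon :: "nat \<Rightarrow> nat \<Rightarrow> nat \<times> nat \<Rightarrow> elt" where
  "mon a b q = tr a b (xR ^ fst q * yR ^ snd q)"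

lemma monR_nth: "(xR ^ i * yR ^ j) !$ n !$ m = (if m = i \<and> n = j then 1 else 0)"
  by (simp add: xR_def yR_def fps_const_power fps_X_power_mult_right_nth)

lemma mon_val: "mon a b q (m, n) = (if m < a \<and> n < b \<and> q = (m, n) then 1 else 0)"
  by (cases q) (auto simp: mon_def tr_def monR_nth)

lemma mon_Lam[simp]: "mon a b q \<in> Lam a b" by (simp add: mon_def)

lemma lmult_one: "h \<in> Lam a b \<Longrightarrow> lmult a b h (tr a b 1) = h"
  by (simp add: lmult_tr cong_mult2[OF tr_emb_tr] tr_emb)

lemma der_one:
  assumes "is_derivation a b D" shows "D (tr a b 1) = (\<lambda>_. 0)"
proof -
  let ?t = "tr a b (1::R)"
  from assms have DL: "D ?t \<in> Lam a b" and LB: "D (lmult a b ?t ?t) = (\<lambda>p. lmult a b (D ?t) ?t p + lmult a b ?t (D ?t) p)"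
    unfolding is_derivation_def is_linear_map_def by auto
  have tt: "lmult a b ?t ?t = ?t" by (rule lmult_one) simp
  have "D ?t = (\<lambda>p. D ?t p + D ?t p)"
    using LB tt lmult_one[OF DL] lmult_comm[of a b ?t "D ?t"] by simp
  thus ?thesis by (simp add: fun_eq_iff)
qed

lemma mon_SucX: "2 \<le> a \<Longrightarrow> mon a b (Suc i, j) = lmult a b Xel (mon a b (i, j))"
  by (simp add: mon_def lmult_tr emb_X cong_mult2[OF tr_emb_tr] mult.assoc)
lemma mon_SucY: "mon a b (i, Suc j) = lmult a b Yel (mon a b (i, j))"
  by (simp add: mon_def lmult_tr emb_Y cong_mult2[OF tr_emb_tr] mult_ac)

lemma der_mon:
  assumes a: "2 \<le> a" and b: "2 \<le> b" and D: "is_derivation a b D" and G: "is_derivation a b G"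
    and X: "D Xel = G Xel" and Y: "D Yel = G Yel"
  shows "D (mon a b (i, j)) = G (mon a b (i, j))"
proof -
  have LD: "\<And>f g. f \<in> Lam a b \<Longrightarrow> g \<in> Lam a b \<Longrightarrow> D (lmult a b f g) = (\<lambda>p. lmult a b (D f) g p + lmult a b f (D g) p)"
    using D unfolding is_derivation_def by blast
  have LG: "\<And>f g. f \<in> Lam a b \<Longrightarrow> g \<in> Lam a b \<Longrightarrow> G (lmult a b f g) = (\<lambda>p. lmult a b (G f) g p + lmult a b f (G g) p)"
    using G unfolding is_derivation_def by blast
  have base: "D (mon a b (0, j)) = G (mon a b (0, j))" for j
  proof (induction j)
    case 0
    have "mon a b (0, 0) = tr a b 1" by (simp add: mon_def)
    then show ?case using der_one[OF D] der_one[OF G] by simp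
  next
    case (Suc j)
    then show ?case using LD[OF Y_Lam[OF a b] mon_Lam] LG[OF Y_Lam[OF a b] mon_Lam] Y
      by (simp add: mon_SucY)
  qed
  show ?thesis
  proof (induction i)
    case 0 then show ?case by (rule base)
  next
    case (Suc i)
    then show ?case using LD[OF X_Lam[OF a b] mon_Lam] LG[OF X_Lam[OF a b] mon_Lam] X
      by (simp add: mon_SucX[OF a])
  qed
qed

lemma Lam_sum: "(\<lambda>p. \<Sum>q\<in>S. f q * mon a b q p) \<in> Lam a b"
  by (auto simp: Lam_def mon_val)

lemma Lam_expand: assumes f: "f \<in> Lam a b" shows "f = (\<lambda>p. \<Sum>q\<in>{..<a}\<times>{..<b}. f q * mon a b q p)"
proof (rule ext)
  fix p :: "nat \<times> nat"
  obtain m n where p: "p = (m, n)" by (cases p)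
  show "f p = (\<Sum>q\<in>{..<a}\<times>{..<b}. f q * mon a b q p)"
  proof (cases "m < a \<and> n < b")
    case True
    then show ?thesis unfolding p mon_val
      by (simp add: if_distrib[of "\<lambda>x. f _ * x"] sum.delta' cong: if_cong)
  next
    case False
    then show ?thesis using f unfolding p mon_val by (auto simp: Lam_def)
  qed
qed

lemma der_unique:
  assumes a: "2 \<le> a" and b: "2 \<le> b" and D: "is_derivation a b D" and G: "is_derivation a b G"
    and X: "D Xel = G Xel" and Y: "D Yel = G Yel" and f: "f \<in> Lam a b"
  shows "D f = G f"
proof -
  have AD: "\<And>f g. f \<in> Lam a b \<Longrightarrow> g \<in> Lam a b \<Longrightarrow> D (\<lambda>p. f p + g p) = (\<lambda>p. D f p + D g p)"
   and SD: "\<And>c f. f \<in> Lam a b \<Longrightarrow> D (\<lambda>p. c * f p) = (\<lambda>p. c * D f p)"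
    using D unfolding is_derivation_def is_linear_map_def by blast+
  have AG: "\<And>f g. f \<in> Lam a b \<Longrightarrow> g \<in> Lam a b \<Longrightarrow> G (\<lambda>p. f p + g p) = (\<lambda>p. G f p + G g p)"
   and SG: "\<And>c f. f \<in> Lam a b \<Longrightarrow> G (\<lambda>p. c * f p) = (\<lambda>p. c * G f p)"
    using G unfolding is_derivation_def is_linear_map_def by blast+
  have z: "(\<lambda>p::nat\<times>nat. 0::complex) \<in> Lam a b" by (simp add: Lam_def)
  have "finite S \<Longrightarrow> D (\<lambda>p. \<Sum>q\<in>S. f q * mon a b q p) = G (\<lambda>p. \<Sum>q\<in>S. f q * mon a b q p)" for S
  proof (induction S rule: finite_induct)
    case empty
    show ?case using SD[OF z, of 0] SG[OF z, of 0] by simp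
  next
    case (insert q S)
    have sc: "(\<lambda>p. f q * mon a b q p) \<in> Lam a b" by (auto simp: Lam_def mon_val)
    have "D (\<lambda>p. \<Sum>q\<in>insert q S. f q * mon a b q p) = D (\<lambda>p. f q * mon a b q p + (\<Sum>q\<in>S. f q * mon a b q p))"
      using insert by simp
    also have "\<dots> = G (\<lambda>p. f q * mon a b q p + (\<Sum>q\<in>S. f q * mon a b q p))"
      using AD[OF sc Lam_sum] AG[OF sc Lam_sum] SD[OF mon_Lam] SG[OF mon_Lam] insert.IH
        der_mon[OF a b D G X Y, of "fst q" "snd q"] by simp
    also have "\<dots> = G (\<lambda>p. \<Sum>q\<in>insert q S. f q * mon a b q p)"
      using insert by simp
    finally show ?case .
  qed
  from this[of "{..<a}\<times>{..<b}"] show ?thesis using Lam_expand[OF f] by simp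
qed

lemma E1_xR[simp]: "E1 xR = xR"
  by (rule fps_ext, rule fps_ext) (simp add: xR_def)
lemma E2_xR[simp]: "E2 xR = 0"
  by (rule fps_ext, rule fps_ext) (simp add: xR_def)
lemma E1_yR[simp]: "E1 yR = 0"
  by (rule fps_ext, rule fps_ext) (simp add: yR_def)
lemma E2_yR[simp]: "E2 yR = yR"
  by (rule fps_ext, rule fps_ext) (simp add: yR_def)

lemma xpow_nth: "(xR ^ k * F) !$ n !$ m = (if m < k then 0 else F !$ n !$ (m - k))"
  by (simp add: xR_def fps_const_power fps_X_power_mult_nth)
lemma ypow_nth: "(yR ^ k * F) !$ n !$ m = (if n < k then 0 else F !$ (n - k) !$ m)"
  by (simp add: yR_def fps_X_power_mult_nth)
lemma x_nth: "(xR * F) !$ n !$ m = (if m = 0 then 0 else F !$ n !$ (m - 1))"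
  using xpow_nth[of 1 F n m] by auto
lemma y_nth: "(F * yR) !$ n !$ m = (if n = 0 then 0 else F !$ (n - 1) !$ m)"
  using ypow_nth[of 1 F n m] by (auto simp: mult.commute)

lemma der_zero:
  assumes "is_derivation a b D" shows "D (\<lambda>_. 0) = (\<lambda>_. 0)"
proof -
  have z: "(\<lambda>p::nat\<times>nat. 0::complex) \<in> Lam a b" by (simp add: Lam_def)
  from assms have S: "\<forall>c::complex. \<forall>f\<in>Lam a b. D (\<lambda>p. c * f p) = (\<lambda>p. c * D f p)"
    unfolding is_derivation_def is_linear_map_def by blast
  show ?thesis using bspec[OF spec[OF S, of 0] z] by simp
qed

lemma der_powX:
  assumes a: "2 \<le> a" and b: "2 \<le> b" and D: "is_derivation a b D"
  shows "D (mon a b (Suc k, 0)) = (\<lambda>p. of_nat (Suc k) * tr a b (xR ^ k * emb (D Xel)) p)"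
proof (induction k)
  have uL: "D Xel \<in> Lam a b" using D X_Lam[OF a b] unfolding is_derivation_def is_linear_map_def by blast
  case 0
  have "mon a b (Suc 0, 0) = Xel" using tr_emb[OF X_Lam[OF a b]] by (simp add: mon_def emb_X)
  then show ?case by (simp add: tr_emb[OF uL])
next
  case (Suc k)
  let ?M = "mon a b (Suc k, 0)"
  let ?u = "emb (D Xel)"
  have LD: "D (lmult a b Xel ?M) = (\<lambda>p. lmult a b (D Xel) ?M p + lmult a b Xel (D ?M) p)"
    using D X_Lam[OF a b] unfolding is_derivation_def by simp
  have 1: "lmult a b (D Xel) ?M = tr a b (?u * xR ^ Suc k)"
    by (simp add: lmult_tr mon_def cong_mult2[OF tr_emb_tr])
  have 2: "lmult a b Xel (D ?M) = (\<lambda>p. of_nat (Suc k) * tr a b (xR ^ Suc k * ?u) p)"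
  proof -
    have "lmult a b Xel (D ?M) = tr a b (xR * (fps_const (fps_const (of_nat (Suc k))) * emb (tr a b (xR ^ k * ?u))))"
      unfolding Suc lmult_tr emb_const emb_X ..
    also have "\<dots> = tr a b (fps_const (fps_const (of_nat (Suc k))) * (xR * emb (tr a b (xR ^ k * ?u))))"
      by (simp only: mult.left_commute)
    also have "\<dots> = (\<lambda>p. of_nat (Suc k) * tr a b (xR * emb (tr a b (xR ^ k * ?u))) p)"
      by (rule tr_const)
    also have "tr a b (xR * emb (tr a b (xR ^ k * ?u))) = tr a b (xR * (xR ^ k * ?u))"
      by (rule cong_mult2[OF tr_emb_tr])
    also have "xR * (xR ^ k * ?u) = xR ^ Suc k * ?u" by (simp add: mult.assoc)
    finally show ?thesis .
  qed
  have e: "mon a b (Suc (Suc k), 0) = lmult a b Xel ?M" by (rule mon_SucX[OF a])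
  have c: "?u * xR ^ Suc k = xR ^ Suc k * ?u" by (rule mult.commute)
  show ?case
    unfolding e LD 1 2 c
    by (simp add: fun_eq_iff ring_distribs)
qed

lemma der_powY:
  assumes a: "2 \<le> a" and b: "2 \<le> b" and D: "is_derivation a b D"
  shows "D (mon a b (0, Suc k)) = (\<lambda>p. of_nat (Suc k) * tr a b (yR ^ k * emb (D Yel)) p)"
proof (induction k)
  have uL: "D Yel \<in> Lam a b" using D Y_Lam[OF a b] unfolding is_derivation_def is_linear_map_def by blast
  case 0
  have "mon a b (0, Suc 0) = Yel" using tr_emb[OF Y_Lam[OF a b]] by (simp add: mon_def emb_Y)
  then show ?case by (simp add: tr_emb[OF uL])
next
  case (Suc k)
  let ?M = "mon a b (0, Suc k)"
  let ?u = "emb (D Yel)"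
  have LD: "D (lmult a b Yel ?M) = (\<lambda>p. lmult a b (D Yel) ?M p + lmult a b Yel (D ?M) p)"
    using D Y_Lam[OF a b] unfolding is_derivation_def by simp
  have 1: "lmult a b (D Yel) ?M = tr a b (?u * yR ^ Suc k)"
    by (simp add: lmult_tr mon_def cong_mult2[OF tr_emb_tr])
  have 2: "lmult a b Yel (D ?M) = (\<lambda>p. of_nat (Suc k) * tr a b (yR ^ Suc k * ?u) p)"
  proof -
    have "lmult a b Yel (D ?M) = tr a b (yR * (fps_const (fps_const (of_nat (Suc k))) * emb (tr a b (yR ^ k * ?u))))"
      unfolding Suc lmult_tr emb_const emb_Y ..
    also have "\<dots> = tr a b (fps_const (fps_const (of_nat (Suc k))) * (yR * emb (tr a b (yR ^ k * ?u))))"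
      by (simp only: mult.left_commute)
    also have "\<dots> = (\<lambda>p. of_nat (Suc k) * tr a b (yR * emb (tr a b (yR ^ k * ?u))) p)"
      by (rule tr_const)
    also have "tr a b (yR * emb (tr a b (yR ^ k * ?u))) = tr a b (yR * (yR ^ k * ?u))"
      by (rule cong_mult2[OF tr_emb_tr])
    also have "yR * (yR ^ k * ?u) = yR ^ Suc k * ?u" by (simp add: mult.assoc)
    finally show ?thesis .
  qed
  have e: "mon a b (0, Suc (Suc k)) = lmult a b Yel ?M" by (rule mon_SucY)
  have c: "?u * yR ^ Suc k = yR ^ Suc k * ?u" by (rule mult.commute)
  show ?case
    unfolding e LD 1 2 c
    by (simp add: fun_eq_iff ring_distribs)
qed

lemma d10_X: "d10 Xel = Xel" by (rule ext) (auto simp: d10_def Xel_def split: if_splits)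
lemma d10_Y: "d10 Yel = (\<lambda>_. 0)" by (rule ext) (auto simp: d10_def Yel_def split: if_splits)
lemma d01_X: "d01 Xel = (\<lambda>_. 0)" by (rule ext) (auto simp: d01_def Xel_def split: if_splits)
lemma d01_Y: "d01 Yel = Yel" by (rule ext) (auto simp: d01_def Yel_def split: if_splits)

lemma lbr_X: "lbr a b l Xel (m, n) = (if m < a \<and> n < b then (if m = 0 then 0 else - (of_nat n * l (m - 1, n))) else 0)"
proof -
  have "B (emb l) xR = - (xR * E2 (emb l))" by (simp add: B_def mult.commute)
  thus ?thesis by (simp add: lbr_tr emb_X tr_def x_nth)
qed
lemma lbr_Y: "lbr a b l Yel (m, n) = (if m < a \<and> n < b then (if n = 0 then 0 else of_nat m * l (m, n - 1)) else 0)"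
proof -
  have "B (emb l) yR = E1 (emb l) * yR" by (simp add: B_def)
  thus ?thesis by (simp add: lbr_tr emb_Y tr_def y_nth W_def)
qed

lemma vanishX:
  assumes a: "2 \<le> a" and b: "2 \<le> b" and D: "is_derivation a b D"
  shows "D Xel (0, j) = 0"
proof -
  have uL: "D Xel \<in> Lam a b" using D X_Lam[OF a b] unfolding is_derivation_def is_linear_map_def by blast
  show ?thesis
  proof (cases "j < b")
    case True
    have m0: "mon a b (Suc (a - 1), 0) = (\<lambda>_. 0)"
      using a by (auto simp: fun_eq_iff mon_val)
    have "(\<lambda>p. of_nat (Suc (a - 1)) * tr a b (xR ^ (a - 1) * emb (D Xel)) p) = (\<lambda>_. 0)"
      using der_powX[OF a b D, of "a - 1"] m0 der_zero[OF D] by simp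
    from fun_cong[OF this, of "(a - 1, j)"] True a
    show ?thesis by (simp add: tr_def xpow_nth)
  next
    case False thus ?thesis using uL by (simp add: Lam_def)
  qed
qed

lemma vanishY:
  assumes a: "2 \<le> a" and b: "2 \<le> b" and D: "is_derivation a b D"
  shows "D Yel (i, 0) = 0"
proof -
  have uL: "D Yel \<in> Lam a b" using D Y_Lam[OF a b] unfolding is_derivation_def is_linear_map_def by blast
  show ?thesis
  proof (cases "i < a")
    case True
    have m0: "mon a b (0, Suc (b - 1)) = (\<lambda>_. 0)"
      using b by (auto simp: fun_eq_iff mon_val)
    have "(\<lambda>p. of_nat (Suc (b - 1)) * tr a b (yR ^ (b - 1) * emb (D Yel)) p) = (\<lambda>_. 0)"
      using der_powY[OF a b D, of "b - 1"] m0 der_zero[OF D] by simp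
    from fun_cong[OF this, of "(i, b - 1)"] True b
    show ?thesis by (simp add: tr_def ypow_nth)
  next
    case False thus ?thesis using uL by (simp add: Lam_def)
  qed
qed

lemma poisson_eq:
  assumes a: "2 \<le> a" and b: "2 \<le> b" and D: "is_poisson_derivation a b D"
    and m: "Suc m < a" and n: "Suc n < b"
  shows "of_nat m * D Xel (Suc m, n) + of_nat n * D Yel (m, Suc n) = 0"
proof -
  let ?u = "D Xel" and ?v = "D Yel"
  have XL: "Xel \<in> Lam a b" and YL: "Yel \<in> Lam a b" using X_Lam[OF a b] Y_Lam[OF a b] .
  have P: "D (lbr a b Xel Yel) = (\<lambda>p. lbr a b ?u Yel p + lbr a b Xel ?v p)"
    using D XL YL unfolding is_poisson_derivation_def by blast
  have L: "D (lmult a b Xel Yel) = (\<lambda>p. lmult a b ?u Yel p + lmult a b Xel ?v p)"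
    using D XL YL unfolding is_poisson_derivation_def is_derivation_def by blast
  have eq: "lbr a b Xel Yel = lmult a b Xel Yel"
    by (simp add: lbr_tr lmult_tr emb_X emb_Y B_def)
  have "lmult a b ?u Yel (Suc m, Suc n) + lmult a b Xel ?v (Suc m, Suc n)
      = lbr a b ?u Yel (Suc m, Suc n) + lbr a b Xel ?v (Suc m, Suc n)"
    using fun_cong[OF P, of "(Suc m, Suc n)"] fun_cong[OF L, of "(Suc m, Suc n)"] eq by simp
  moreover have "B (emb ?u) yR = E1 (emb ?u) * yR" by (simp add: B_def)
  moreover have "B xR (emb ?v) = xR * E2 (emb ?v)" by (simp add: B_def)
  ultimately have "?u (Suc m, n) + ?v (m, Suc n) = of_nat (Suc m) * ?u (Suc m, n) + of_nat (Suc n) * ?v (m, Suc n)"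
    using m n by (simp add: lmult_tr lbr_tr emb_X emb_Y tr_def x_nth y_nth W_def del: E2_nth)
  thus ?thesis by (simp add: algebra_simps)
qed

lemma classify:
  assumes a: "2 \<le> a" and b: "2 \<le> b" and D: "is_poisson_derivation a b D"
  shows "\<exists>c1 c2::complex. \<exists>l\<in>Lam a b. \<forall>f\<in>Lam a b.
               D f = (\<lambda>p. c1 * d10 f p + c2 * d01 f p + lbr a b l f p)"
proof -
  have Dd: "is_derivation a b D" using D unfolding is_poisson_derivation_def by blast
  define u where "u = D Xel"
  define v where "v = D Yel"
  have uL: "u \<in> Lam a b" and vL: "v \<in> Lam a b"
    using Dd X_Lam[OF a b] Y_Lam[OF a b] unfolding u_def v_def is_derivation_def is_linear_map_def by blast+
  have u0: "\<And>j. u (0, j) = 0" unfolding u_def by (rule vanishX[OF a b Dd])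
  have v0: "\<And>i. v (i, 0) = 0" unfolding v_def by (rule vanishY[OF a b Dd])
  have E: "\<And>m n. Suc m < a \<Longrightarrow> Suc n < b \<Longrightarrow> of_nat m * u (Suc m, n) + of_nat n * v (m, Suc n) = 0"
    unfolding u_def v_def by (rule poisson_eq[OF a b D])
  define c1 where "c1 = u (1, 0)"
  define c2 where "c2 = v (0, 1)"
  define l :: elt where "l = (\<lambda>(i, j). if i < a \<and> j < b then
      (if 1 \<le> j \<and> i + 1 < a then - u (i + 1, j) / of_nat j
       else if 1 \<le> i \<and> j + 1 < b then v (i, j + 1) / of_nat i else 0) else 0)"
  have lL: "l \<in> Lam a b" by (auto simp: Lam_def l_def)
  define G where "G = (\<lambda>f p. c1 * d10 f p + c2 * d01 f p + lbr a b l f p)"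
  have Gd: "is_derivation a b G" unfolding G_def
    by (rule deriv_comb) (use d10_pd d01_pd ham_pd in \<open>auto simp: is_poisson_derivation_def\<close>)
  have GX: "G Xel = u"
  proof (rule ext)
    fix p :: "nat \<times> nat"
    obtain m n where p: "p = (m, n)" by (cases p)
    show "G Xel p = u p"
    proof (cases "m < a \<and> n < b")
      case False
      then show ?thesis using uL a b unfolding p G_def d10_X d01_X lbr_X
        by (auto simp: Lam_def Xel_def)
    next
      case True
      show ?thesis
      proof (cases m)
        case 0 then show ?thesis unfolding p G_def d10_X d01_X lbr_X by (simp add: u0 Xel_def)
      next
        case (Suc m')
        show ?thesis
        proof (cases n)
          case 0
          show ?thesis
          proof (cases "m' = 0")
            case True then show ?thesis using Suc 0 unfolding p G_def d10_X d01_X lbr_X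
              by (simp add: Xel_def c1_def)
          next
            case False
            have "of_nat m' * u (Suc m', 0) = 0" using E[of m' 0] True Suc b 0 by simp
            with False have "u (Suc m', 0) = 0" by simp
            then show ?thesis using Suc 0 False unfolding p G_def d10_X d01_X lbr_X
              by (simp add: Xel_def)
          qed
        next
          case (Suc n')
          have lv: "l (m - 1, n) = - u (m, n) / of_nat n" using True \<open>m = Suc m'\<close> Suc by (simp add: l_def)
          have nz: "(of_nat n :: complex) \<noteq> 0" unfolding Suc of_nat_eq_0_iff by simp
          have "- (of_nat n * l (m - 1, n)) = u (m, n)" unfolding lv using nz by simp
          moreover have "Xel (m, n) = 0" using Suc by (simp add: Xel_def)
          moreover have "m \<noteq> 0" using \<open>m = Suc m'\<close> by simp
          ultimately have r: "c1 * Xel (m, n) + c2 * 0 + lbr a b l Xel (m, n) = u (m, n)"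
            using True by (simp only: lbr_X) simp
          show ?thesis unfolding p G_def d10_X d01_X using r by simp
        qed
      qed
    qed
  qed
  have GY: "G Yel = v"
  proof (rule ext)
    fix p :: "nat \<times> nat"
    obtain m n where p: "p = (m, n)" by (cases p)
    show "G Yel p = v p"
    proof (cases "m < a \<and> n < b")
      case False
      then show ?thesis using vL a b unfolding p G_def d10_Y d01_Y lbr_Y
        by (auto simp: Lam_def Yel_def)
    next
      case True
      show ?thesis
      proof (cases n)
        case 0 then show ?thesis unfolding p G_def d10_Y d01_Y lbr_Y by (simp add: v0 Yel_def)
      next
        case (Suc n')
        show ?thesis
        proof (cases m)
          case 0
          show ?thesis
          proof (cases "n' = 0")
            case True then show ?thesis using Suc 0 unfolding p G_def d10_Y d01_Y lbr_Y
              by (simp add: Yel_def c2_def)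
          next
            case False
            have "of_nat n' * v (0, Suc n') = 0" using E[of 0 n'] True Suc a 0 by simp
            with False have "v (0, Suc n') = 0" by simp
            then show ?thesis using Suc 0 False unfolding p G_def d10_Y d01_Y lbr_Y
              by (simp add: Yel_def)
          qed
        next
          case (Suc m')
          have lv: "of_nat m * l (m, n') = v (m, n)"
          proof (cases "1 \<le> n' \<and> m + 1 < a")
            case c: True
            have l1: "l (m, n') = - u (m + 1, n') / of_nat n'" using True c \<open>n = Suc n'\<close> by (simp add: l_def)
            have e1: "of_nat m * u (Suc m, n') + of_nat n' * v (m, Suc n') = 0"
              using E[of m n'] c True \<open>n = Suc n'\<close> by simp
            have nz: "(of_nat n' :: complex) \<noteq> 0" using c by (simp only: of_nat_eq_0_iff) simp
            have e2: "of_nat n' * v (m, Suc n') = - (of_nat m * u (Suc m, n'))"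
              using e1 by (simp add: add_eq_0_iff2 add.commute)
            have "v (m, Suc n') = (of_nat n' * v (m, Suc n')) / of_nat n'" using nz by simp
            hence "v (m, Suc n') = - (of_nat m * u (Suc m, n')) / of_nat n'" unfolding e2 .
            then show ?thesis using l1 \<open>n = Suc n'\<close> by simp
          next
            case c: False
            have l2: "l (m, n') = v (m, n) / of_nat m" using True c \<open>n = Suc n'\<close> Suc by (auto simp: l_def)
            have nz: "(of_nat m :: complex) \<noteq> 0" unfolding of_nat_eq_0_iff using Suc by simp
            show ?thesis unfolding l2 using nz by simp
          qed
          have g: "G Yel (m, n) = c1 * 0 + c2 * Yel (m, n) + lbr a b l Yel (m, n)"
            by (simp add: G_def d10_Y d01_Y)
          have y0: "Yel (m, n) = 0" using Suc by (simp add: Yel_def)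
          have lb: "lbr a b l Yel (m, n) = of_nat m * l (m, n')"
            using True \<open>n = Suc n'\<close> by (simp only: lbr_Y) simp
          show ?thesis unfolding p g y0 lb lv by simp
        qed
      qed
    qed
  qed
  have "\<forall>f\<in>Lam a b. D f = G f"
    using der_unique[OF a b Dd Gd] GX GY unfolding u_def v_def by auto
  thus ?thesis unfolding G_def using lL by blast
qed

theorem mainTheorem3:
  fixes a b :: nat
  assumes "a \<ge> 2" and "b \<ge> 2"
  shows "is_poisson_derivation a b d10 \<and> d10 Xel = Xel \<and> d10 Yel = (\<lambda>_. 0)
       \<and> is_poisson_derivation a b d01 \<and> d01 Xel = (\<lambda>_. 0) \<and> d01 Yel = Yel
       \<and> (\<forall>l\<in>Lam a b. is_poisson_derivation a b (lbr a b l))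
       \<and> (\<forall>D. is_poisson_derivation a b D \<longrightarrow>
            (\<exists>c1 c2::complex. \<exists>l\<in>Lam a b. \<forall>f\<in>Lam a b.
               D f = (\<lambda>p. c1 * d10 f p + c2 * d01 f p + lbr a b l f p)))
       \<and> (\<forall>c1 c2::complex. \<forall>l\<in>Lam a b.
            (\<forall>f\<in>Lam a b. (\<lambda>p. c1 * d10 f p + c2 * d01 f p) = lbr a b l f)
            \<longrightarrow> c1 = 0 \<and> c2 = 0)"
proof (intro conjI ballI allI impI)
  show "is_poisson_derivation a b d10" by (rule d10_pd)
  show "is_poisson_derivation a b d01" by (rule d01_pd)
  show "d10 Xel = Xel" "d10 Yel = (\<lambda>_. 0)" "d01 Xel = (\<lambda>_. 0)" "d01 Yel = Yel"
    by (rule d10_X d10_Y d01_X d01_Y)+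
  fix l assume "l \<in> Lam a b"
  show "is_poisson_derivation a b (lbr a b l)" by (rule ham_pd)
next
  fix D assume "is_poisson_derivation a b D"
  then show "\<exists>c1 c2::complex. \<exists>l\<in>Lam a b. \<forall>f\<in>Lam a b.
               D f = (\<lambda>p. c1 * d10 f p + c2 * d01 f p + lbr a b l f p)"
    by (rule classify[OF assms])
next
  fix c1 c2 :: complex and l
  assume H: "\<forall>f\<in>Lam a b. (\<lambda>p. c1 * d10 f p + c2 * d01 f p) = lbr a b l f"
  have "c1 * d10 Xel (1, 0) + c2 * d01 Xel (1, 0) = lbr a b l Xel (1, 0)"
    using fun_cong[OF bspec[OF H X_Lam[OF assms]], of "(1, 0)"] by simp
  then show "c1 = 0" using assms unfolding d10_X d01_X lbr_X by (simp add: Xel_def)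
  have "c1 * d10 Yel (0, 1) + c2 * d01 Yel (0, 1) = lbr a b l Yel (0, 1)"
    using fun_cong[OF bspec[OF H Y_Lam[OF assms]], of "(0, 1)"] by simp
  then show "c2 = 0" using assms unfolding d10_Y d01_Y lbr_Y by (simp add: Yel_def)
qed

end
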